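(* Let $n\ge0$ and $\kappa\ge0$, and suppose the arc travel times are $t_a(v_a)=b_a(v_a)^n$ with $b_a>0$ for each $a\in\mathcal A$. Let $\bar{\mathbf v}\in\mathbf V$ satisfy $$\sum_{a\in\mathcal A}\lambda_at_a(\bar v_a)(v_a-\bar v_a)\ge0\qquad\text{for all }\mathbf v\in\mathbf V$$ for some constants $\lambda_a\in[\tfrac1{1+\kappa},1]$, and let $\bar{\mathbf f}\in\mathbf F$ be any path flow inducing $\bar{\mathbf v}$. Let $\hat{\mathbf f}^0\in\mathbf F_{1+\kappa}$ be a PRUE flow for the demands $(1+\kappa)Q_w$ and $\mathbf f^0\in\mathbf F$ a PRUE flow for the demands $Q_w$. Then $C(\bar{\mathbf f})\le C(\hat{\mathbf f}^0)$, and consequently $C(\bar{\mathbf f})\le(1+\kappa)^{n+1}C(\mathbf f^0)$.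
   Context: Let $G=(\mathcal N,\mathcal A)$ be a finite directed graph and $\mathcal W$ a finite set of OD pairs; each $w$ has demand $Q_w>0$ and a finite set $\mathcal P_w$ of paths from its origin to its destination; $\mathcal P=\bigcup_w\mathcal P_w$; $\delta^p_a=1$ if arc $a$ lies on path $p$, else $0$. $\mathbf F=\{\mathbf f\ge0:\sum_{p\in\mathcal P_w}f_p=Q_w\ \forall w\}$ and $\mathbf F_{1+\kappa}=\{(1+\kappa)\mathbf f:\mathbf f\in\mathbf F\}$ (the feasible flows when every demand is multiplied by $1+\kappa$). A path flow induces arc flows $v_a=\sum_p\delta^p_af_p$; $\mathbf V$ is the set of arc flows induced by $\mathbf F$. Path travel time $c_p(\mathbf f)=\sum_a\delta^p_at_a(v_a)$; total system travel time $C(\mathbf f)=\sum_pc_p(\mathbf f)f_p=\sum_at_a(v_a)v_a$. A feasible flow (in $\mathbf F$ or $\mathbf F_{1+\kappa}$) is a PRUE if for all $w$ and $p\in\mathcal P_w$, $f_p>0\implies c_p(\mathbf f)=\min_{p'\in\mathcal P_w}c_{p'}(\mathbf f)$. *)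

theory Defs
  imports Complex_Main
begin

definition is_path ::
  "('a \<Rightarrow> 'n) \<Rightarrow> ('a \<Rightarrow> 'n) \<Rightarrow> 'a set \<Rightarrow> 'n \<Rightarrow> 'n \<Rightarrow> 'a list \<Rightarrow> bool" where
  "is_path tail head A u d p \<longleftrightarrow>
     p \<noteq> [] \<and> set p \<subseteq> A \<and> tail (p ! 0) = u \<and> head (last p) = d \<and>
     (\<forall>i. Suc i < length p \<longrightarrow> head (p ! i) = tail (p ! Suc i))"

definition delta :: "'a list \<Rightarrow> 'a \<Rightarrow> real" where
  "delta p a = (if a \<in> set p then 1 else 0)"

text \<open>Path flows are indexed by pairs (w,p) with p in P w. Feasible path flows
  when each demand Q w is multiplied by s (s = 1 gives F, s = 1+kappa gives F_{1+kappa}).\<close>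
definition feasible_flows ::
  "'w set \<Rightarrow> ('w \<Rightarrow> real) \<Rightarrow> ('w \<Rightarrow> 'a list set) \<Rightarrow> real \<Rightarrow> ('w \<times> 'a list \<Rightarrow> real) set" where
  "feasible_flows W Q P s =
     {f. (\<forall>w\<in>W. \<forall>p\<in>P w. f (w, p) \<ge> 0) \<and> (\<forall>w\<in>W. (\<Sum>p\<in>P w. f (w, p)) = s * Q w)}"

definition arc_flow ::
  "'w set \<Rightarrow> ('w \<Rightarrow> 'a list set) \<Rightarrow> ('w \<times> 'a list \<Rightarrow> real) \<Rightarrow> 'a \<Rightarrow> real" where
  "arc_flow W P f a = (\<Sum>(w, p)\<in>Sigma W P. delta p a * f (w, p))"

definition arc_flows ::
  "'w set \<Rightarrow> ('w \<Rightarrow> real) \<Rightarrow> ('w \<Rightarrow> 'a list set) \<Rightarrow> ('a \<Rightarrow> real) set" where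
  "arc_flows W Q P = arc_flow W P ` feasible_flows W Q P 1"

text \<open>x^n for real n \<ge> 0 and x \<ge> 0, with the convention x^0 = 1 (also at x = 0).\<close>
definition rpow :: "real \<Rightarrow> real \<Rightarrow> real" where
  "rpow x n = (if n = 0 then 1 else x powr n)"

definition path_cost ::
  "'a set \<Rightarrow> ('a \<Rightarrow> real \<Rightarrow> real) \<Rightarrow> 'w set \<Rightarrow> ('w \<Rightarrow> 'a list set) \<Rightarrow>
   ('w \<times> 'a list \<Rightarrow> real) \<Rightarrow> 'a list \<Rightarrow> real" where
  "path_cost A t W P f p = (\<Sum>a\<in>A. delta p a * t a (arc_flow W P f a))"

definition total_cost ::
  "'a set \<Rightarrow> ('a \<Rightarrow> real \<Rightarrow> real) \<Rightarrow> 'w set \<Rightarrow> ('w \<Rightarrow> 'a list set) \<Rightarrow>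
   ('w \<times> 'a list \<Rightarrow> real) \<Rightarrow> real" where
  "total_cost A t W P f = (\<Sum>a\<in>A. t a (arc_flow W P f a) * arc_flow W P f a)"

definition is_PRUE ::
  "'a set \<Rightarrow> ('a \<Rightarrow> real \<Rightarrow> real) \<Rightarrow> 'w set \<Rightarrow> ('w \<Rightarrow> real) \<Rightarrow> ('w \<Rightarrow> 'a list set) \<Rightarrow>
   real \<Rightarrow> ('w \<times> 'a list \<Rightarrow> real) \<Rightarrow> bool" where
  "is_PRUE A t W Q P s f \<longleftrightarrow> f \<in> feasible_flows W Q P s \<and>
     (\<forall>w\<in>W. \<forall>p\<in>P w. f (w, p) > 0 \<longrightarrow>
        path_cost A t W P f p = (MIN p'\<in>P w. path_cost A t W P f p'))"

end

theory Submission
  imports Defs "HOL-Analysis.Analysis"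
begin

lemma young_n:
  fixes n x y :: real
  assumes "n \<ge> 0" "x \<ge> 0" "y \<ge> 0"
  shows "rpow x n * y \<le> n/(n+1) * (rpow x n * x) + 1/(n+1) * (rpow y n * y)"
proof (cases "n = 0")
  case True then show ?thesis by (simp add: rpow_def)
next
  case False
  hence n: "n > 0" using assms by simp
  have px: "rpow x n * x = x powr (n+1)" using n assms
    by (simp add: rpow_def powr_add)
  have py: "rpow y n * y = y powr (n+1)" using n assms
    by (simp add: rpow_def powr_add)
  show ?thesis
  proof (cases "x = 0 \<or> y = 0")
    case True
    then show ?thesis using n assms px py by (auto simp: rpow_def)
  next
    case False
    hence xy: "x > 0" "y > 0" using assms by auto
    have "(x powr (n+1)) powr (n/(n+1)) * (y powr (n+1)) powr (1/(n+1))
        \<le> n/(n+1) * x powr (n+1) + 1/(n+1) * y powr (n+1)"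
      by (rule Youngs_inequality_0) (use n xy in \<open>auto simp: field_simps\<close>)
    moreover have "(x powr (n+1)) powr (n/(n+1)) = x powr n"
      using n by (simp add: powr_powr)
    moreover have "(y powr (n+1)) powr (1/(n+1)) = y"
      using n xy by (simp add: powr_powr)
    ultimately show ?thesis using px py n by (simp add: rpow_def)
  qed
qed

lemma rpow_nonneg: "x \<ge> 0 \<Longrightarrow> rpow x n \<ge> 0"
  by (simp add: rpow_def)

lemma rpow_mono: "0 \<le> x \<Longrightarrow> x \<le> y \<Longrightarrow> n \<ge> 0 \<Longrightarrow> rpow x n \<le> rpow y n"
  by (simp add: rpow_def powr_mono2)

lemma arc_flow_nonneg:
  assumes "f \<in> feasible_flows W Q P s"
  shows "arc_flow W P f a \<ge> 0"
  using assms unfolding arc_flow_def feasible_flows_def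
  by (intro sum_nonneg) (auto simp: delta_def)

theorem theorem1:
  fixes N :: "'n set" and A :: "'a set" and tail head :: "'a \<Rightarrow> 'n"
    and W :: "'w set" and orig dest :: "'w \<Rightarrow> 'n" and Q :: "'w \<Rightarrow> real"
    and P :: "'w \<Rightarrow> 'a list set"
    and n \<kappa> :: real and b lam :: "'a \<Rightarrow> real" and t :: "'a \<Rightarrow> real \<Rightarrow> real"
    and vbar :: "'a \<Rightarrow> real" and fbar fhat0 f0 :: "'w \<times> 'a list \<Rightarrow> real"
  assumes "finite N" "finite A" "\<forall>a\<in>A. tail a \<in> N \<and> head a \<in> N"
    and "finite W" "\<forall>w\<in>W. orig w \<in> N \<and> dest w \<in> N \<and> Q w > 0"
    and "\<forall>w\<in>W. finite (P w) \<and> (\<forall>p\<in>P w. is_path tail head A (orig w) (dest w) p)"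
    and "n \<ge> 0" "\<kappa> \<ge> 0"
    and "\<forall>a\<in>A. b a > 0"
    and "\<And>a x. t a x = b a * rpow x n"
    and "\<forall>a\<in>A. 1 / (1 + \<kappa>) \<le> lam a \<and> lam a \<le> 1"
    and "vbar \<in> arc_flows W Q P"
    and "\<forall>v\<in>arc_flows W Q P. (\<Sum>a\<in>A. lam a * t a (vbar a) * (v a - vbar a)) \<ge> 0"
    and "fbar \<in> feasible_flows W Q P 1" "arc_flow W P fbar = vbar"
    and "is_PRUE A t W Q P (1 + \<kappa>) fhat0"
    and "is_PRUE A t W Q P 1 f0"
  shows "total_cost A t W P fbar \<le> total_cost A t W P fhat0 \<and>
         total_cost A t W P fbar \<le> (1 + \<kappa>) powr (n + 1) * total_cost A t W P f0"
proof -
  note tdef = assms(10)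
  have n0: "n \<ge> 0" and k0: "\<kappa> \<ge> 0" using assms by auto
  have C: "total_cost A t W P f = (\<Sum>a\<in>A. b a * (rpow (arc_flow W P f a) n * arc_flow W P f a))" for f
    unfolding total_cost_def tdef by (simp add: mult.assoc)
  have xnn: "vbar a \<ge> 0" for a
    using arc_flow_nonneg[OF assms(14)] assms(15) by metis
  have key: "total_cost A t W P fbar \<le> (1+\<kappa>) * total_cost A t W P g"
    if g: "g \<in> feasible_flows W Q P 1" for g
  proof -
    define y where "y = arc_flow W P g"
    have ynn: "y a \<ge> 0" for a using arc_flow_nonneg[OF g] y_def by simp
    have "y \<in> arc_flows W Q P" using g y_def by (simp add: arc_flows_def)
    hence vi: "(\<Sum>a\<in>A. lam a * b a * rpow (vbar a) n * (y a - vbar a)) \<ge> 0"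
      using assms(13) tdef by (simp add: mult.assoc)
    define Sx where "Sx = (\<Sum>a\<in>A. lam a * b a * (rpow (vbar a) n * vbar a))"
    define Sy where "Sy = (\<Sum>a\<in>A. lam a * b a * (rpow (y a) n * y a))"
    define M where "M = (\<Sum>a\<in>A. lam a * b a * (rpow (vbar a) n * y a))"
    have lb: "lam a * b a \<ge> 0" if "a \<in> A" for a
    proof -
      have "1/(1+\<kappa>) > 0" using k0 by simp
      thus ?thesis using assms(9,11) that by (meson less_le_trans less_imp_le mult_pos_pos)
    qed
    have "M - Sx = (\<Sum>a\<in>A. lam a * b a * rpow (vbar a) n * (y a - vbar a))"
      unfolding M_def Sx_def by (simp add: sum_subtractf[symmetric] algebra_simps)
    hence 1: "Sx \<le> M" using vi by simp
    have "M \<le> (\<Sum>a\<in>A. lam a * b a * (n/(n+1) * (rpow (vbar a) n * vbar a) + 1/(n+1) * (rpow (y a) n * y a)))"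
      unfolding M_def
      by (intro sum_mono mult_left_mono young_n) (use n0 xnn ynn lb in auto)
    also have "\<dots> = n/(n+1) * Sx + 1/(n+1) * Sy"
      unfolding Sx_def Sy_def by (simp add: sum.distrib sum_distrib_left algebra_simps)
    finally have "Sx \<le> n/(n+1) * Sx + 1/(n+1) * Sy" using 1 by simp
    hence "(n+1) * Sx \<le> (n+1) * (n/(n+1) * Sx + 1/(n+1) * Sy)" using n0
      by (intro mult_left_mono) auto
    also have "\<dots> = n * Sx + Sy"
    proof -
      have "n + 1 \<noteq> 0" using n0 by simp
      thus ?thesis by (simp add: distrib_left)
    qed
    finally have SxSy: "Sx \<le> Sy" by (simp add: algebra_simps)
    have "total_cost A t W P fbar \<le> (\<Sum>a\<in>A. (1+\<kappa>) * (lam a * b a * (rpow (vbar a) n * vbar a)))"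
      unfolding C assms(15)
    proof (intro sum_mono)
      fix a assume a: "a \<in> A"
      have "1 \<le> (1+\<kappa>) * lam a" using assms(11) a k0 by (simp add: field_simps)
      moreover have "b a * (rpow (vbar a) n * vbar a) \<ge> 0"
        using assms(9) a xnn rpow_nonneg by (intro mult_nonneg_nonneg) (auto simp: less_imp_le)
      ultimately have "1 * (b a * (rpow (vbar a) n * vbar a)) \<le> ((1+\<kappa>) * lam a) * (b a * (rpow (vbar a) n * vbar a))"
        by (rule mult_right_mono)
      thus "b a * (rpow (vbar a) n * vbar a) \<le> (1+\<kappa>) * (lam a * b a * (rpow (vbar a) n * vbar a))"
        by (simp add: algebra_simps)
    qed
    also have "\<dots> = (1+\<kappa>) * Sx" unfolding Sx_def by (simp add: sum_distrib_left)
    also have "\<dots> \<le> (1+\<kappa>) * Sy" using SxSy k0 by simp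
    also have "Sy \<le> total_cost A t W P g"
      unfolding C Sy_def y_def[symmetric]
    proof (intro sum_mono)
      fix a assume a: "a \<in> A"
      have "lam a \<le> 1" using assms(11) a by simp
      moreover have "b a * (rpow (y a) n * y a) \<ge> 0"
        using assms(9) a ynn rpow_nonneg by (intro mult_nonneg_nonneg) (auto simp: less_imp_le)
      ultimately have "lam a * (b a * (rpow (y a) n * y a)) \<le> 1 * (b a * (rpow (y a) n * y a))"
        by (rule mult_right_mono)
      thus "lam a * b a * (rpow (y a) n * y a) \<le> b a * (rpow (y a) n * y a)" by (simp add: algebra_simps)
    qed
    hence "(1+\<kappa>) * Sy \<le> (1+\<kappa>) * total_cost A t W P g" using k0 by simp
    finally show ?thesis .
  qed
  have Cnn: "total_cost A t W P f \<ge> 0" if "f \<in> feasible_flows W Q P s" for f s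
    unfolding C using assms(9) arc_flow_nonneg[OF that] rpow_nonneg by (intro sum_nonneg mult_nonneg_nonneg) (auto simp: less_imp_le)
  have f0F: "f0 \<in> feasible_flows W Q P 1" using assms(17) by (simp add: is_PRUE_def)
  have part2: "total_cost A t W P fbar \<le> (1 + \<kappa>) powr (n + 1) * total_cost A t W P f0"
  proof -
    have "(1+\<kappa>) = (1+\<kappa>) powr 1" using k0 by simp
    also have "\<dots> \<le> (1+\<kappa>) powr (n+1)" using k0 n0 by (intro powr_mono) auto
    finally have "(1+\<kappa>) * total_cost A t W P f0 \<le> (1 + \<kappa>) powr (n + 1) * total_cost A t W P f0"
      using Cnn[OF f0F] by (intro mult_right_mono) auto
    thus ?thesis using key[OF f0F] by simp
  qed
  define c where "c = 1 + \<kappa>"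
  have c1: "c \<ge> 1" using k0 c_def by simp
  have fhF: "fhat0 \<in> feasible_flows W Q P c" using assms(16) c_def by (simp add: is_PRUE_def)
  define g where "g = (\<lambda>x. fhat0 x / c)"
  have gF: "g \<in> feasible_flows W Q P 1"
    using fhF c1 unfolding feasible_flows_def g_def by (auto simp: sum_divide_distrib[symmetric])
  have Vg: "arc_flow W P g a = arc_flow W P fhat0 a / c" for a
    unfolding arc_flow_def g_def by (simp add: sum_divide_distrib case_prod_unfold)
  have "c * total_cost A t W P g \<le> total_cost A t W P fhat0"
    unfolding C Vg sum_distrib_left
  proof (intro sum_mono)
    fix a assume a: "a \<in> A"
    define yy where "yy = arc_flow W P fhat0 a"
    have yy0: "yy \<ge> 0" using arc_flow_nonneg[OF fhF] yy_def by simp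
    have "yy / c \<le> yy" using yy0 c1 by (simp add: divide_le_eq mult_le_cancel_left1)
    hence r: "rpow (yy/c) n \<le> rpow yy n" using rpow_mono yy0 c1 n0 by simp
    have "c * (b a * (rpow (yy / c) n * (yy / c))) = b a * rpow (yy/c) n * yy"
      using c1 by simp
    also have "\<dots> \<le> b a * rpow yy n * yy"
      using r assms(9) a yy0 by (intro mult_right_mono mult_left_mono) auto
    finally show "c * (b a * (rpow (arc_flow W P fhat0 a / c) n * (arc_flow W P fhat0 a / c)))
         \<le> b a * (rpow (arc_flow W P fhat0 a) n * arc_flow W P fhat0 a)"
      unfolding yy_def by (simp add: mult.assoc)
  qed
  hence part1: "total_cost A t W P fbar \<le> total_cost A t W P fhat0"
    using key[OF gF] c_def by simp
  show ?thesis using part1 part2 by simp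
qed

end
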